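(* Let $H = (V,E)$ be a hypertree with $E = \{e_1, \ldots, e_k\}$. Suppose that each edge $e_i$ has an associated (strict) partial order $<_i$ on the vertex set $e_i$. Define the relation $<$ on $V$ as the transitive closure of all the relations $<_i$, i.e. $x < y$ iff there is a chain $x = v_1 <_{i_1} v_2 <_{i_2} \cdots <_{i_{l-1}} v_l = y$ with $l \ge 2$. Then $(V, <)$ is a poset.
   Context: A hypergraph is a pair $H=(V,E)$ with $V$ finite and $E$ a family of subsets of $V$ (edges) with $|e|>1$ for each $e\in E$. A path is a sequence $v_1, e_1, v_2, e_2, \ldots, e_m, v_{m+1}$ with $e_i \in E$, $v_i, v_{i+1} \in e_i$, the edges distinct and the vertices distinct except that $v_1 = v_{m+1}$ is allowed; if $v_1 = v_{m+1}$ and $m>1$ it is a cycle. $H$ is connected if there is a path between any two vertices. A hypertree is a connected hypergraph with no cycles. *)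

theory Defs
  imports Main
begin

definition hypergraph :: "'a set \<Rightarrow> 'a set set \<Rightarrow> bool" where
  "hypergraph V E \<longleftrightarrow> finite V \<and> (\<forall>e\<in>E. e \<subseteq> V \<and> card e > 1)"

definition hpath :: "'a set \<Rightarrow> 'a set set \<Rightarrow> 'a list \<Rightarrow> 'a set list \<Rightarrow> bool" where
  "hpath V E vs es \<longleftrightarrow>
     length vs = length es + 1 \<and> set vs \<subseteq> V \<and> set es \<subseteq> E \<and>
     (\<forall>i < length es. vs ! i \<in> es ! i \<and> vs ! (i+1) \<in> es ! i) \<and>
     distinct es \<and>
     (distinct vs \<or> (distinct (butlast vs) \<and> distinct (tl vs) \<and> hd vs = last vs))"

definition hcycle :: "'a set \<Rightarrow> 'a set set \<Rightarrow> 'a list \<Rightarrow> 'a set list \<Rightarrow> bool" where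
  "hcycle V E vs es \<longleftrightarrow> hpath V E vs es \<and> hd vs = last vs \<and> length es > 1"

definition hconnected :: "'a set \<Rightarrow> 'a set set \<Rightarrow> bool" where
  "hconnected V E \<longleftrightarrow>
     (\<forall>x\<in>V. \<forall>y\<in>V. \<exists>vs es. hpath V E vs es \<and> hd vs = x \<and> last vs = y)"

definition hypertree :: "'a set \<Rightarrow> 'a set set \<Rightarrow> bool" where
  "hypertree V E \<longleftrightarrow> hypergraph V E \<and> hconnected V E \<and> (\<nexists>vs es. hcycle V E vs es)"

definition strict_partial_order_on :: "'a set \<Rightarrow> 'a rel \<Rightarrow> bool" where
  "strict_partial_order_on A r \<longleftrightarrow> r \<subseteq> A \<times> A \<and> irrefl r \<and> trans r"

end

theory Submission
  imports Defs
begin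

lemma chain_exists:
  assumes "(x,y) \<in> (\<Union>e\<in>E. ord e)\<^sup>+"
  shows "\<exists>v f n. n \<ge> 1 \<and> v 0 = x \<and> v n = y \<and> (\<forall>i<n. f i \<in> E \<and> (v i, v (Suc i)) \<in> ord (f i))"
  using assms
proof (induction rule: trancl_induct)
  case (base y)
  then obtain e where e: "e \<in> E" "(x,y) \<in> ord e" by blast
  show ?case
    by (rule exI[of _ "\<lambda>k. if k = 0 then x else y"], rule exI[of _ "\<lambda>_. e"], rule exI[of _ 1])
       (use e in auto)
next
  case (step y z)
  then obtain v f n where c: "n \<ge> 1" "v 0 = x" "v n = y" "\<forall>i<n. f i \<in> E \<and> (v i, v (Suc i)) \<in> ord (f i)" by blast
  from step obtain e where e: "e \<in> E" "(y,z) \<in> ord e" by blast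
  show ?case
  proof (rule exI[of _ "v(Suc n := z)"], rule exI[of _ "f(n := e)"], rule exI[of _ "Suc n"])
    have "\<forall>i<Suc n. (f(n := e)) i \<in> E \<and> ((v(Suc n := z)) i, (v(Suc n := z)) (Suc i)) \<in> ord ((f(n := e)) i)"
    proof (intro allI impI)
      fix i assume "i < Suc n"
      then show "(f(n := e)) i \<in> E \<and> ((v(Suc n := z)) i, (v(Suc n := z)) (Suc i)) \<in> ord ((f(n := e)) i)"
        using c e by (cases "i = n") auto
    qed
    then show "1 \<le> Suc n \<and> (v(Suc n := z)) 0 = x \<and> (v(Suc n := z)) (Suc n) = z \<and> (\<forall>i<Suc n. (f(n := e)) i \<in> E \<and> ((v(Suc n := z)) i, (v(Suc n := z)) (Suc i)) \<in> ord ((f(n := e)) i))"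
      using c by auto
  qed
qed

lemma mk_cycle:
  assumes m: "m \<ge> 2" and c: "\<forall>i<m. g i \<in> E \<and> w i \<in> g i \<and> w (Suc i) \<in> g i"
    and ig: "inj_on g {..<m}" and iw: "inj_on w {..<m}" and wm: "w m = w 0"
    and EV: "\<forall>e\<in>E. e \<subseteq> V"
  shows "hcycle V E (map w [0..<Suc m]) (map g [0..<m])"
proof -
  have sV: "set (map w [0..<Suc m]) \<subseteq> V"
  proof
    fix x assume "x \<in> set (map w [0..<Suc m])"
    then obtain k where k: "k \<le> m" "x = w k" by (force simp del: upt_Suc simp: less_Suc_eq_le)
    show "x \<in> V"
    proof (cases "k < m")
      case True thus ?thesis using c EV k by blast
    next
      case False
      then have "x = w 0" using k wm by auto
      have "0 < m" using m by simp
      thus ?thesis using c EV \<open>x = w 0\<close> by blast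
    qed
  qed
  have d1: "distinct (butlast (map w [0..<Suc m]))"
    using iw by (simp add: distinct_map atLeast0LessThan)
  have inj2: "inj_on w {1..<Suc m}"
  proof (rule inj_onI)
    fix i j assume ij: "i \<in> {1..<Suc m}" "j \<in> {1..<Suc m}" "w i = w j"
    define i' where "i' = (if i = m then 0 else i)"
    define j' where "j' = (if j = m then 0 else j)"
    have "w i' = w j'" using ij wm by (auto simp: i'_def j'_def)
    moreover have "i' < m" "j' < m" using ij m by (auto simp: i'_def j'_def)
    ultimately have "i' = j'" using iw by (auto dest: inj_onD)
    thus "i = j" using ij by (auto simp: i'_def j'_def split: if_splits)
  qed
  have d2: "distinct (tl (map w [0..<Suc m]))"
  proof -
    have "tl (map w [0..<Suc m]) = map w [1..<Suc m]"
      by (simp only: map_tl[symmetric] tl_upt One_nat_def)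
    thus ?thesis using inj2 by (simp only: distinct_map set_upt) simp
  qed
  show ?thesis
    unfolding hcycle_def hpath_def
    using sV d1 d2 c m ig wm
    by (auto simp: distinct_map atLeast0LessThan nth_append hd_map last_map simp del: upt_Suc)
qed


definition cch :: "'a set set \<Rightarrow> ('a set \<Rightarrow> 'a rel) \<Rightarrow> (nat \<Rightarrow> 'a) \<Rightarrow> (nat \<Rightarrow> 'a set) \<Rightarrow> nat \<Rightarrow> bool" where
  "cch E ord v f n \<longleftrightarrow> n \<ge> 1 \<and> v n = v 0 \<and> (\<forall>i<n. f i \<in> E \<and> (v i, v (Suc i)) \<in> ord (f i))"

theorem lemma3p2:
  fixes V :: "'a set" and E :: "'a set set" and ord :: "'a set \<Rightarrow> 'a rel"
  assumes "hypertree V E"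
    and "\<And>e. e \<in> E \<Longrightarrow> strict_partial_order_on e (ord e)"
  shows "strict_partial_order_on V ((\<Union>e\<in>E. ord e)\<^sup>+)"
proof -
  have EV: "\<forall>e\<in>E. e \<subseteq> V" using assms(1) unfolding hypertree_def hypergraph_def by blast
  have nocyc: "\<not> hcycle V E vs es" for vs es using assms(1) unfolding hypertree_def by blast
  have osub: "ord e \<subseteq> e \<times> e" and oirr: "irrefl (ord e)" and otr: "trans (ord e)" if "e \<in> E" for e
    using assms(2)[OF that] unfolding strict_partial_order_on_def by auto
  let ?R = "\<Union>e\<in>E. ord e"
  have RV: "?R \<subseteq> V \<times> V" using osub EV by blast
  have "irrefl (?R\<^sup>+)"
  proof (unfold irrefl_def, rule allI, rule notI)
    fix x assume "(x,x) \<in> ?R\<^sup>+"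
    from chain_exists[OF this] have ex: "\<exists>n v f. cch E ord v f n" unfolding cch_def by metis
    define n where "n = (LEAST n. \<exists>v f. cch E ord v f n)"
    have "\<exists>v f. cch E ord v f n" unfolding n_def by (rule LeastI_ex[OF ex])
    then obtain v f where c: "cch E ord v f n" by blast
    have minl: "\<not> cch E ord v' f' n'" if "n' < n" for v' f' n'
      using not_less_Least[OF that[unfolded n_def]] by blast
    have n1: "n \<ge> 1" and vn: "v n = v 0" and st: "\<And>i. i < n \<Longrightarrow> f i \<in> E \<and> (v i, v (Suc i)) \<in> ord (f i)"
      using c unfolding cch_def by auto
    have mem: "v i \<in> f i \<and> v (Suc i) \<in> f i" if "i < n" for i
      using st[OF that] osub[of "f i"] by blast
    have A: "v i \<noteq> v j" if ij: "i < j" "j < n" for i j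
    proof
      assume eq: "v i = v j"
      have "cch E ord (\<lambda>k. v (k+i)) (\<lambda>k. f (k+i)) (j-i)"
        unfolding cch_def using ij eq st by (auto simp: add.commute)
      moreover have "j - i < n" using ij by simp
      ultimately show False using minl by blast
    qed
    have injv: "inj_on v {..<n}"
      by (rule inj_onI) (metis A lessThan_iff linorder_neqE_nat)
    have B: "f i \<noteq> f (Suc i)" if si: "Suc i < n" for i
    proof
      assume eq: "f i = f (Suc i)"
      define v' where "v' = (\<lambda>k. if k \<le> i then v k else v (Suc k))"
      define f' where "f' = (\<lambda>k. if k \<le> i then f k else f (Suc k))"
      have "cch E ord v' f' (n - 1)"
        unfolding cch_def
      proof (intro conjI)
        show "1 \<le> n - 1" using si by simp
        show "v' (n - 1) = v' 0" using si vn by (simp add: v'_def)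
        show "\<forall>k<n - 1. f' k \<in> E \<and> (v' k, v' (Suc k)) \<in> ord (f' k)"
        proof (intro allI impI)
        fix k assume k: "k < n - 1"
        show "f' k \<in> E \<and> (v' k, v' (Suc k)) \<in> ord (f' k)"
        proof (cases "k < i")
          case True thus ?thesis using st[of k] k by (simp add: v'_def f'_def)
        next
          case False
          show ?thesis
          proof (cases "k = i")
            case True
            have "(v i, v (Suc i)) \<in> ord (f i)" using st si by simp
            moreover have "(v (Suc i), v (Suc (Suc i))) \<in> ord (f i)" using st[OF si] eq by simp
            ultimately have "(v i, v (Suc (Suc i))) \<in> ord (f i)"
              using otr[of "f i"] st[of i] si by (meson Suc_lessD transD)
            thus ?thesis using True st si by (simp add: v'_def f'_def)
          next
            case False2: False
            then have "k > i" using \<open>\<not> k < i\<close> by simp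
            thus ?thesis using st[of "Suc k"] k by (simp add: v'_def f'_def)
          qed
        qed
        qed
      qed
      moreover have "n - 1 < n" using si by simp
      ultimately show False using minl by blast
    qed
    have n2: "n \<ge> 2"
    proof (rule ccontr)
      assume "\<not> n \<ge> 2"
      then have "n = 1" using n1 by simp
      then have "(v 0, v 0) \<in> ord (f 0)" using st[of 0] vn by simp
      thus False using oirr[of "f 0"] st[of 0] \<open>n = 1\<close> unfolding irrefl_def by auto
    qed
    show False
    proof (cases "inj_on f {..<n}")
      case True
      have "hcycle V E (map v [0..<Suc n]) (map f [0..<n])"
        by (rule mk_cycle[OF n2 _ True injv vn EV]) (use st mem in blast)
      thus False using nocyc by blast
    next
      case False
      then obtain i j where ij: "i < n" "j < n" "i \<noteq> j" "f i = f j"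
        unfolding inj_on_def by auto
      define P where "P = (\<lambda>d. \<exists>a. a + d < n \<and> 0 < d \<and> f a = f (a + d))"
      have "P (if i < j then j - i else i - j)"
        unfolding P_def using ij
        by (cases "i < j") (rule exI[of _ "if i < j then i else j"]; auto)+
      then have exP: "\<exists>d. P d" by blast
      define d where "d = (LEAST d. P d)"
      have Pd: "P d" unfolding d_def by (rule LeastI_ex[OF exP])
      have mind: "\<not> P d'" if "d' < d" for d' using not_less_Least[OF that[unfolded d_def]] .
      from Pd obtain a where a: "a + d < n" "0 < d" "f a = f (a + d)" unfolding P_def by blast
      have d2: "d \<ge> 2"
      proof (rule ccontr)
        assume "\<not> d \<ge> 2" then have "d = 1" using a by simp
        thus False using B[of a] a by simp
      qed
      define w where "w = (\<lambda>k. if k < d then v (Suc a + k) else v (Suc a))"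
      define g where "g = (\<lambda>k. if k < d - 1 then f (Suc a + k) else f a)"
      have cond: "\<forall>k<d. g k \<in> E \<and> w k \<in> g k \<and> w (Suc k) \<in> g k"
      proof (intro allI impI)
        fix k assume k: "k < d"
        show "g k \<in> E \<and> w k \<in> g k \<and> w (Suc k) \<in> g k"
        proof (cases "k < d - 1")
          case True
          then have "Suc k < d" by simp
          then show ?thesis using mem[of "Suc a + k"] st[of "Suc a + k"] a k True
            by (simp add: g_def w_def)
        next
          case False
          then have kd: "k = d - 1" using k by simp
          have "Suc a + k = a + d" using kd d2 by simp
          then show ?thesis using mem[of "a + d"] mem[of a] st[of a] a kd d2
            by (simp add: g_def w_def)
        qed
      qed
      have injw: "inj_on w {..<d}"
      proof (rule inj_onI)
        fix x y assume "x \<in> {..<d}" "y \<in> {..<d}" "w x = w y"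
        then have "v (Suc a + x) = v (Suc a + y)" "Suc a + x < n" "Suc a + y < n"
          using a by (auto simp: w_def)
        then show "x = y" using injv by (auto dest: inj_onD)
      qed
      have injg: "inj_on g {..<d}"
      proof (rule ccontr)
        assume "\<not> inj_on g {..<d}"
        then obtain x y where xy: "x < y" "y < d" "g x = g y"
          unfolding inj_on_def by (metis lessThan_iff linorder_neqE_nat)
        show False
        proof (cases "y < d - 1")
          case True
          then have "P (y - x)" unfolding P_def using xy a g_def
            by (intro exI[of _ "Suc a + x"]) auto
          moreover have "y - x < d" using xy by simp
          ultimately show False using mind by blast
        next
          case False
          then have yd: "y = d - 1" using xy by simp
          then have "x < d - 1" using xy by simp
          moreover have "g y = f a" using yd by (simp add: g_def)
          ultimately have "f (Suc a + x) = f a" using xy by (simp add: g_def)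
          note this \<open>x < d - 1\<close>
          then have "P (Suc x)" unfolding P_def using a
            by (intro exI[of _ a]) auto
          moreover have "Suc x < d" using \<open>x < d - 1\<close> by simp
          ultimately show False using mind by blast
        qed
      qed
      have "w d = w 0" using a by (simp add: w_def)
      have "hcycle V E (map w [0..<Suc d]) (map g [0..<d])"
        by (rule mk_cycle[OF d2 cond injg injw \<open>w d = w 0\<close> EV])
      thus False using nocyc by blast
    qed
  qed
  then show ?thesis
    unfolding strict_partial_order_on_def
    using trancl_subset_Sigma[OF RV] trans_trancl by blast
qed

end
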